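(* Let $\mathbf a=(a_1,\dots,a_k)$ be a sequence of nonnegative integers and $1\le j\le k$. There is a bijection between $D_j(a_1,\dots,a_k)$ and $D_j^*(a_1,\dots,a_{j-1},a_j+1,a_{j+1},\dots,a_k)$.
   Context: For $\mathbf a=(a_1,\dots,a_k)$ with nonnegative integer entries summing to $n$, put $c_0=0$, $c_j=a_1+\dots+a_j$, and let the $j$-th block be $A_j=\{c_{j-1}+1,\dots,c_j\}$. Let $S_{\mathbf a}\subseteq S_n$ be the set of permutations $\pi$ of $[n]$ with $\pi_i>\pi_{i+1}$ whenever $i,i+1$ lie in the same block. A fixed point is an $i$ with $\pi_i=i$. $D_j(\mathbf a)$ is the set of permutations in $S_{\mathbf a}$ with no fixed point in $A_1\cup\dots\cup A_j$; $D^*_j(\mathbf a)$ is the set of permutations in $S_{\mathbf a}$ with no fixed point in $A_1\cup\dots\cup A_{j-1}$ but with a fixed point in $A_j$. *)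

theory Defs
  imports "HOL-Combinatorics.Permutations"
begin

text \<open>A composition a = (a_1,...,a_k) is a list of naturals; blocks are 1-indexed.\<close>

definition partsum :: "nat list \<Rightarrow> nat \<Rightarrow> nat" where
  "partsum a j = sum_list (take j a)"

definition block :: "nat list \<Rightarrow> nat \<Rightarrow> nat set" where
  "block a j = {partsum a (j - 1) + 1 .. partsum a j}"

definition same_block :: "nat list \<Rightarrow> nat \<Rightarrow> nat \<Rightarrow> bool" where
  "same_block a i i' \<longleftrightarrow> (\<exists>j\<in>{1..length a}. i \<in> block a j \<and> i' \<in> block a j)"

definition Sa :: "nat list \<Rightarrow> (nat \<Rightarrow> nat) set" where
  "Sa a = {\<pi>. \<pi> permutes {1..sum_list a} \<and>
              (\<forall>i. same_block a i (i + 1) \<longrightarrow> \<pi> i > \<pi> (i + 1))}"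

definition Dj :: "nat \<Rightarrow> nat list \<Rightarrow> (nat \<Rightarrow> nat) set" where
  "Dj j a = {\<pi> \<in> Sa a. \<forall>l\<in>{1..j}. \<forall>i\<in>block a l. \<pi> i \<noteq> i}"

definition Djstar :: "nat \<Rightarrow> nat list \<Rightarrow> (nat \<Rightarrow> nat) set" where
  "Djstar j a = {\<pi> \<in> Sa a. (\<forall>l\<in>{1..<j}. \<forall>i\<in>block a l. \<pi> i \<noteq> i)
                           \<and> (\<exists>i\<in>block a j. \<pi> i = i)}"

end

theory Submission
  imports Defs
begin


definition sh :: "nat \<Rightarrow> nat \<Rightarrow> nat" where "sh p v = (if v < p then v else Suc v)"
definition ush :: "nat \<Rightarrow> nat \<Rightarrow> nat" where "ush p v = (if v < p then v else v - 1)"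
definition ins :: "nat \<Rightarrow> (nat \<Rightarrow> nat) \<Rightarrow> nat \<Rightarrow> nat" where
  "ins p f x = (if x < p then sh p (f x) else if x = p then p else sh p (f (x - 1)))"
definition del :: "nat \<Rightarrow> (nat \<Rightarrow> nat) \<Rightarrow> nat \<Rightarrow> nat" where
  "del p f x = (if x < p then ush p (f x) else ush p (f (Suc x)))"

lemma del_ins: "del p (ins p f) = f"
  by (rule ext) (auto simp: del_def ins_def sh_def ush_def)

lemma ins_del: assumes "g p = p" "inj g" shows "ins p (del p g) = g"
proof (rule ext)
  fix x
  have ne: "y \<noteq> p \<Longrightarrow> g y \<noteq> p" for y using assms by (metis injD)
  show "ins p (del p g) x = g x"
  proof (cases "x < p")
    case True then show ?thesis using ne[of x] by (auto simp: del_def ins_def sh_def ush_def)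
  next
    case False
    then consider "x = p" | "x > p" by linarith
    then show ?thesis
    proof cases
      case 1 then show ?thesis using assms(1) by (simp add: ins_def)
    next
      case 2
      then have "Suc (x - 1) = x" by simp
      then show ?thesis using 2 ne[of x] by (auto simp: del_def ins_def sh_def ush_def)
    qed
  qed
qed

lemma ps_mono: "k \<le> m \<Longrightarrow> partsum b k \<le> partsum b m"
proof -
  assume "k \<le> m"
  then obtain d where "m = k + d" by (metis le_add_diff_inverse)
  then show ?thesis by (simp add: partsum_def take_add)
qed

lemma ps_le: "partsum b k \<le> sum_list b"
  unfolding partsum_def by (metis append_take_drop_id le_add1 sum_list_append)

lemma SB: "same_block b x (Suc x) \<longleftrightarrow> (\<exists>l\<in>{1..length b}. partsum b (l-1) < x \<and> Suc x \<le> partsum b l)"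
  unfolding same_block_def block_def by (auto; force)

lemma dec:
  assumes "\<forall>i. same_block b i (i+1) \<longrightarrow> \<pi> i > \<pi> (i+1)"
    and "\<forall>z. x \<le> z \<and> z < y \<longrightarrow> same_block b z (z+1)" and "x \<le> y"
  shows "\<pi> y + (y - x) \<le> \<pi> x"
  using assms(2,3)
proof (induction y)
  case 0 then show ?case by simp
next
  case (Suc y)
  show ?case
  proof (cases "x = Suc y")
    case False
    then have "x \<le> y" using Suc by simp
    with Suc have "\<pi> y + (y - x) \<le> \<pi> x" by auto
    moreover have "\<pi> (Suc y) < \<pi> y" using assms(1) Suc.prems \<open>x \<le> y\<close> by auto
    ultimately show ?thesis using \<open>x \<le> y\<close> by linarith
  qed simp
qed

lemma sh_ne: "sh p v \<noteq> p" "p \<noteq> sh p v" by (auto simp: sh_def)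
lemma sh_inj: "sh p v = sh p w \<longleftrightarrow> v = w" by (auto simp: sh_def)
lemma sh_less: "sh p v < sh p w \<longleftrightarrow> v < w" by (auto simp: sh_def)

lemma ins_fix_lt: "x < p \<Longrightarrow> ins p f x = x \<longleftrightarrow> f x = x"
  by (auto simp: ins_def sh_def)
lemma ins_fix_gt: "p < x \<Longrightarrow> ins p f x = x \<longleftrightarrow> f (x - 1) = x - 1"
  by (auto simp: ins_def sh_def)

lemma ins_inj: assumes "inj f" shows "inj (ins p f)"
proof (rule injI)
  fix x y assume e: "ins p f x = ins p f y"
  show "x = y"
  proof (cases "x = p")
    case True then show ?thesis using e by (auto simp: ins_def sh_ne split: if_splits)
  next
    case xn: False
    show ?thesis
    proof (cases "y = p")
      case True then show ?thesis using e by (auto simp: ins_def sh_ne split: if_splits)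
    next
      case False
      have "f (if x < p then x else x - 1) = f (if y < p then y else y - 1)"
        using e xn False by (auto simp: ins_def sh_inj split: if_splits)
      then have "(if x < p then x else x - 1) = (if y < p then y else y - 1)"
        using assms by (simp add: inj_eq)
      then show ?thesis using xn False by (auto split: if_splits)
    qed
  qed
qed

lemma ins_perm: assumes f: "f permutes {1..m}" and p: "1 \<le> p" "p \<le> m + 1"
  shows "ins p f permutes {1..m+1}"
proof (rule inj_imp_permutes)
  show "inj_on (ins p f) {1..m+1}" by (rule inj_on_subset[OF ins_inj[OF permutes_inj[OF f]]]) simp
  show "finite {1..m+1}" by simp
  have fo: "x \<notin> {1..m} \<Longrightarrow> f x = x" for x using f by (simp add: permutes_def)
  have fi: "x \<in> {1..m} \<Longrightarrow> f x \<in> {1..m}" for x using permutes_in_image[OF f] by blast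
  show "ins p f x \<in> {1..m+1}" if "x \<in> {1..m+1}" for x
  proof -
    have "x < p \<Longrightarrow> x \<in> {1..m}" "p < x \<Longrightarrow> x - 1 \<in> {1..m}" using that p by auto
    then show ?thesis using fi p that by (auto simp: ins_def sh_def)
  qed
  show "ins p f x = x" if "x \<notin> {1..m+1}" for x
  proof (cases "x = 0")
    case True then show ?thesis using fo[of 0] p by (simp add: ins_def sh_def)
  next
    case False then have "x > m + 1" using that by auto
    then have "f (x - 1) = x - 1" using fo[of "x - 1"] by (simp; linarith)
    moreover have "\<not> x < p" "x \<noteq> p" "\<not> x - 1 < p" using \<open>x > m + 1\<close> p by auto
    ultimately show ?thesis by (simp add: ins_def sh_def)
  qed
qed

lemma del_fix_lt: "x < q \<Longrightarrow> g x \<noteq> q \<Longrightarrow> del q g x = x \<longleftrightarrow> g x = x"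
  by (auto simp: del_def ush_def)
lemma del_fix_ge: "q \<le> x \<Longrightarrow> g (Suc x) \<noteq> q \<Longrightarrow> del q g x = x \<longleftrightarrow> g (Suc x) = Suc x"
  by (auto simp: del_def ush_def)

lemma del_perm: assumes g: "g permutes {1..m+1}" and q: "1 \<le> q" "q \<le> m + 1" "g q = q"
  shows "del q g permutes {1..m}"
proof (rule inj_imp_permutes)
  have ig: "inj g" using g by (rule permutes_inj)
  have ne: "y \<noteq> q \<Longrightarrow> g y \<noteq> q" for y using ig q(3) by (metis injD)
  show "inj_on (del q g) {1..m}"
  proof (rule inj_onI)
    fix x y assume "x \<in> {1..m}" "y \<in> {1..m}" and e: "del q g x = del q g y"
    define ex where "ex = (if x < q then x else Suc x)"
    define ey where "ey = (if y < q then y else Suc y)"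
    have "ex \<noteq> q" "ey \<noteq> q" unfolding ex_def ey_def by auto
    then have n1: "g ex \<noteq> q" "g ey \<noteq> q" using ne by auto
    have "del q g x = ush q (g ex)" "del q g y = ush q (g ey)" unfolding ex_def ey_def del_def by auto
    then have "ush q (g ex) = ush q (g ey)" using e by simp
    then have "g ex = g ey" using n1 by (auto simp: ush_def split: if_splits)
    then have "ex = ey" using ig by (simp add: inj_eq)
    then show "x = y" unfolding ex_def ey_def by (auto split: if_splits)
  qed
  show "finite {1..m}" by simp
  have fo: "x \<notin> {1..m+1} \<Longrightarrow> g x = x" for x using g by (simp add: permutes_def)
  have fi: "x \<in> {1..m+1} \<Longrightarrow> g x \<in> {1..m+1}" for x using permutes_in_image[OF g] by blast
  show "del q g x \<in> {1..m}" if "x \<in> {1..m}" for x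
  proof (cases "x < q")
    case True
    then have "g x \<in> {1..m+1}" "g x \<noteq> q" using fi that ne by auto
    then show ?thesis using True q by (auto simp: del_def ush_def)
  next
    case False
    then have "g (Suc x) \<in> {1..m+1}" "g (Suc x) \<noteq> q" using fi that ne by auto
    then show ?thesis using False q by (auto simp: del_def ush_def)
  qed
  show "del q g x = x" if "x \<notin> {1..m}" for x
  proof (cases "x = 0")
    case True then show ?thesis using fo[of 0] q by (simp add: del_def ush_def)
  next
    case False then have "x > m" using that by auto
    then have "g (Suc x) = Suc x" using fo[of "Suc x"] by simp
    moreover have "\<not> x < q" using \<open>x > m\<close> q by simp
    ultimately show ?thesis by (simp add: del_def ush_def)
  qed
qed



locale S =
  fixes a :: "nat list" and j :: nat
  assumes j1: "1 \<le> j" and jl: "j \<le> length a"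
begin

abbreviation "a' \<equiv> a[j - 1 := a ! (j - 1) + 1]"
abbreviation "n \<equiv> sum_list a"
abbreviation "L \<equiv> partsum a (j - 1) + 1"
abbreviation "R \<equiv> partsum a j"

lemma len': "length a' = length a" by simp

lemma ps': "partsum a' k = partsum a k + (if j \<le> k then 1 else 0)"
proof -
  have "partsum a' k = sum_list ((take k a)[j - 1 := a ! (j - 1) + 1])"
    by (simp add: partsum_def take_update_swap)
  also have "\<dots> = partsum a k + (if j \<le> k then 1 else 0)"
  proof (cases "j \<le> k")
    case True
    then have "j - 1 < length (take k a)" using j1 jl by (simp; linarith)
    then show ?thesis using True j1 jl
      by (simp add: sum_list_update partsum_def)
  next
    case False
    then have "length (take k a) \<le> j - 1" by simp
    then show ?thesis using False by (simp add: partsum_def list_update_beyond)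
  qed
  finally show ?thesis .
qed

lemma n': "sum_list a' = n + 1"
  using j1 jl by (simp add: sum_list_update)

lemma LR: "L \<le> R + 1" "R \<le> n" "1 \<le> L"
  using ps_mono[of "j - 1" j a] ps_le[of a j] by auto

lemma blockj: "block a j = {L..R}" unfolding block_def by simp
lemma blockj': "block a' j = {L..R+1}"
proof -
  have "\<not> j \<le> j - 1" using j1 by simp
  then show ?thesis unfolding block_def ps' by simp
qed
lemma block_lt: "l < j \<Longrightarrow> block a' l = block a l"
proof -
  assume "l < j"
  then have "\<not> j \<le> l - 1" "\<not> j \<le> l" by auto
  then show ?thesis unfolding block_def ps' by simp
qed
lemma block_lt_L: "l < j \<Longrightarrow> i \<in> block a l \<Longrightarrow> i < L"
proof -
  assume "l < j" "i \<in> block a l"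
  then have "l \<le> j - 1" "i \<le> partsum a l" unfolding block_def by auto
  then show ?thesis using ps_mono[of l "j - 1" a] by linarith
qed

lemma F1: assumes "Suc y \<le> R" shows "same_block a' y (Suc y) \<longleftrightarrow> same_block a y (Suc y)"
proof
  assume "same_block a' y (Suc y)"
  then obtain l where l: "l \<in> {1..length a}" "partsum a' (l-1) < y" "Suc y \<le> partsum a' l"
    unfolding SB len' by blast
  have "partsum a (l-1) < y" using l(2) unfolding ps' by (auto split: if_splits)
  moreover have "Suc y \<le> partsum a l"
  proof (cases "j \<le> l")
    case True then show ?thesis using ps_mono[OF True, of a] assms by simp
  next
    case False then show ?thesis using l(3) unfolding ps' by simp
  qed
  ultimately show "same_block a y (Suc y)" unfolding SB using l(1) by blast
next
  assume "same_block a y (Suc y)"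
  then obtain l where l: "l \<in> {1..length a}" "partsum a (l-1) < y" "Suc y \<le> partsum a l"
    unfolding SB by blast
  have "partsum a' (l-1) < y"
  proof (cases "j \<le> l - 1")
    case True then show ?thesis using ps_mono[OF True, of a] assms l(2) by simp
  next
    case False then show ?thesis using l(2) unfolding ps' by simp
  qed
  moreover have "Suc y \<le> partsum a' l" using l(3) unfolding ps' by simp
  ultimately show "same_block a' y (Suc y)" unfolding SB len' using l(1) by blast
qed

lemma F2: assumes "L \<le> y" shows "same_block a' (Suc y) (Suc (Suc y)) \<longleftrightarrow> same_block a y (Suc y)"
proof
  assume "same_block a' (Suc y) (Suc (Suc y))"
  then obtain l where l: "l \<in> {1..length a}" "partsum a' (l-1) < Suc y" "Suc (Suc y) \<le> partsum a' l"
    unfolding SB len' by blast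
  have "partsum a (l-1) < y"
  proof (cases "j \<le> l - 1")
    case True then show ?thesis using l(2) unfolding ps' by simp
  next
    case False then have "l - 1 \<le> j - 1" by simp
    then show ?thesis using ps_mono[of "l-1" "j-1" a] assms by simp
  qed
  moreover have "Suc y \<le> partsum a l" using l(3) unfolding ps' by (auto split: if_splits)
  ultimately show "same_block a y (Suc y)" unfolding SB using l(1) by blast
next
  assume "same_block a y (Suc y)"
  then obtain l where l: "l \<in> {1..length a}" "partsum a (l-1) < y" "Suc y \<le> partsum a l"
    unfolding SB by blast
  have "partsum a' (l-1) < Suc y" using l(2) unfolding ps' by simp
  moreover have "Suc (Suc y) \<le> partsum a' l"
  proof (cases "j \<le> l")
    case True then show ?thesis using l(3) unfolding ps' by simp
  next
    case False then have "l \<le> j - 1" by simp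
    then show ?thesis using ps_mono[of l "j-1" a] assms l(3) by simp
  qed
  ultimately show "same_block a' (Suc y) (Suc (Suc y))" unfolding SB len' using l(1) by blast
qed

lemma F3: "L \<le> y \<Longrightarrow> Suc y \<le> R + 1 \<Longrightarrow> same_block a' y (Suc y)"
  unfolding SB len' ps' using j1 jl by (intro bexI[of _ j]) auto

lemma F3a: "L \<le> y \<Longrightarrow> Suc y \<le> R \<Longrightarrow> same_block a y (Suc y)"
  unfolding SB using j1 jl by (intro bexI[of _ j]) auto

lemma G: assumes "same_block b y (Suc y)" "partsum b (k - 1) < Suc y" "Suc y \<le> partsum b k + 1" "1 \<le> k"
  shows "partsum b (k - 1) < y \<and> Suc y \<le> partsum b k"
proof -
  obtain l where l: "l \<ge> 1" "partsum b (l-1) < y" "Suc y \<le> partsum b l"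
    using assms(1) unfolding SB by auto
  have "l = k"
  proof (rule ccontr)
    assume "l \<noteq> k"
    then consider "l < k" | "k < l" by linarith
    then show False
    proof cases
      case 1 then have "l \<le> k - 1" by simp
      then show False using ps_mono[of l "k-1" b] l assms by simp
    next
      case 2 then have "k \<le> l - 1" by simp
      then show False using ps_mono[of k "l-1" b] l assms by simp
    qed
  qed
  then show ?thesis using l by simp
qed

end


lemma ush_less: "v \<noteq> q \<Longrightarrow> w \<noteq> q \<Longrightarrow> v < w \<Longrightarrow> ush q v < ush q w"
  by (auto simp: ush_def)

context S begin

lemma Sa_perm: "\<pi> \<in> Sa b \<Longrightarrow> \<pi> permutes {1..sum_list b}" by (simp add: Sa_def)
lemma Sa_dec: "\<pi> \<in> Sa b \<Longrightarrow> same_block b i (Suc i) \<Longrightarrow> \<pi> (Suc i) < \<pi> i" by (simp add: Sa_def)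

lemma decA: assumes "\<pi> \<in> Sa a" "L \<le> x" "x \<le> y" "y \<le> R" shows "\<pi> y + (y - x) \<le> \<pi> x"
proof (rule dec[of a])
  show "\<forall>i. same_block a i (i + 1) \<longrightarrow> \<pi> (i + 1) < \<pi> i" using assms(1) by (simp add: Sa_def)
  show "\<forall>z. x \<le> z \<and> z < y \<longrightarrow> same_block a z (z + 1)" using assms F3a by auto
qed (use assms in auto)

lemma decA': assumes "\<pi> \<in> Sa a'" "L \<le> x" "x \<le> y" "y \<le> R + 1" shows "\<pi> y + (y - x) \<le> \<pi> x"
proof (rule dec[of a'])
  show "\<forall>i. same_block a' i (i + 1) \<longrightarrow> \<pi> (i + 1) < \<pi> i" using assms(1) by (simp add: Sa_def)
  show "\<forall>z. x \<le> z \<and> z < y \<longrightarrow> same_block a' z (z + 1)" using assms F3 by auto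
qed (use assms in auto)

lemma jj: "\<not> j \<le> j - 1" using j1 by simp

definition P where "P \<pi> = (LEAST x. L \<le> x \<and> (x = R + 1 \<or> \<pi> x < x))"
definition Q where "Q \<pi> = (THE x. x \<in> {L..R+1} \<and> \<pi> x = x)"

lemma Dj_Sa: "\<pi> \<in> Dj j a \<Longrightarrow> \<pi> \<in> Sa a" by (simp add: Dj_def)
lemma Dj_der: "\<pi> \<in> Dj j a \<Longrightarrow> l \<in> {1..j} \<Longrightarrow> i \<in> block a l \<Longrightarrow> \<pi> i \<noteq> i" by (simp add: Dj_def)

lemma PA:
  assumes D: "\<pi> \<in> Dj j a"
  shows "L \<le> P \<pi>" "P \<pi> \<le> R + 1" "P \<pi> \<le> R \<Longrightarrow> \<pi> (P \<pi>) < P \<pi>"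
    "L \<le> x \<Longrightarrow> x < P \<pi> \<Longrightarrow> P \<pi> \<le> \<pi> x" "P \<pi> \<le> x \<Longrightarrow> x \<le> R \<Longrightarrow> \<pi> x < P \<pi>"
proof -
  have 1: "L \<le> P \<pi> \<and> (P \<pi> = R + 1 \<or> \<pi> (P \<pi>) < P \<pi>)" unfolding P_def
    by (rule LeastI[of _ "R+1"]) (use LR in auto)
  have 2: "P \<pi> \<le> R + 1" unfolding P_def by (rule Least_le) (use LR in auto)
  have 3: "y < \<pi> y" if "L \<le> y" "y < P \<pi>" for y
  proof -
    have "\<not> (L \<le> y \<and> (y = R + 1 \<or> \<pi> y < y))" using that(2) unfolding P_def by (rule not_less_Least)
    then have "y \<le> \<pi> y" using that(1) by auto
    moreover have "\<pi> y \<noteq> y" using Dj_der[OF D, of j y] blockj that 2 j1 by auto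
    ultimately show ?thesis by simp
  qed
  show "L \<le> P \<pi>" "P \<pi> \<le> R + 1" using 1 2 by auto
  show "P \<pi> \<le> R \<Longrightarrow> \<pi> (P \<pi>) < P \<pi>" using 1 by auto
  show "P \<pi> \<le> \<pi> x" if "L \<le> x" "x < P \<pi>"
  proof -
    have "\<pi> (P \<pi> - 1) + (P \<pi> - 1 - x) \<le> \<pi> x" using decA[OF Dj_Sa[OF D], of x "P \<pi> - 1"] that 2 by auto
    moreover have "P \<pi> - 1 < \<pi> (P \<pi> - 1)" using 3[of "P \<pi> - 1"] that by auto
    ultimately show ?thesis by linarith
  qed
  show "\<pi> x < P \<pi>" if "P \<pi> \<le> x" "x \<le> R"
  proof -
    have "\<pi> x + (x - P \<pi>) \<le> \<pi> (P \<pi>)" using decA[OF Dj_Sa[OF D], of "P \<pi>" x] that 1 by auto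
    moreover have "\<pi> (P \<pi>) < P \<pi>" using 1 that by auto
    ultimately show ?thesis by linarith
  qed
qed

lemma Quniq: assumes "\<pi> \<in> Sa a'" "x \<in> {L..R+1}" "\<pi> x = x" shows "Q \<pi> = x"
  unfolding Q_def
proof (rule the_equality)
  show "x \<in> {L..R + 1} \<and> \<pi> x = x" using assms by auto
  fix y assume y: "y \<in> {L..R + 1} \<and> \<pi> y = y"
  show "y = x"
  proof (rule ccontr)
    assume "y \<noteq> x"
    then consider "x < y" | "y < x" by linarith
    then show False
    proof cases
      case 1 then show False using decA'[OF assms(1), of x y] assms y by auto
    next
      case 2 then show False using decA'[OF assms(1), of y x] assms y by auto
    qed
  qed
qed

lemma partA:
  assumes D: "\<pi> \<in> Dj j a"
  shows "ins (P \<pi>) \<pi> \<in> Djstar j a'" "Q (ins (P \<pi>) \<pi>) = P \<pi>"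
proof -
  define p where "p = P \<pi>"
  note pa = PA[OF D, folded p_def]
  have S: "\<pi> \<in> Sa a" using D by (rule Dj_Sa)
  have perm: "ins p \<pi> permutes {1..sum_list a'}"
    unfolding n' using ins_perm[OF Sa_perm[OF S]] pa(1,2) LR by auto
  have decr: "ins p \<pi> (i + 1) < ins p \<pi> i" if sb: "same_block a' i (i + 1)" for i
  proof -
    consider "Suc i < p" | "Suc i = p" | "i = p" | "p < i" by linarith
    then show ?thesis
    proof cases
      case 1
      then have "same_block a i (Suc i)" using F1[of i] sb pa(2) by auto
      then have "\<pi> (Suc i) < \<pi> i" using Sa_dec[OF S] by blast
      then show ?thesis using 1 by (simp add: ins_def sh_less)
    next
      case 2
      have "partsum a' (j - 1) < i" using G[of a' i j] sb pa(1,2) 2 j1 unfolding ps' by auto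
      then have "L \<le> i" unfolding ps' using j1 by (auto split: if_splits)
      then have "p \<le> \<pi> i" using pa(4)[of i] 2 by auto
      then show ?thesis using 2 by (simp add: ins_def sh_def)
    next
      case 3
      have "Suc i \<le> partsum a' j" using G[of a' i j] sb pa(1,2) 3 j1 jj unfolding ps' by auto
      then have "p \<le> R" using 3 unfolding ps' by simp
      then have "\<pi> p < p" using pa(3) by simp
      have e1: "ins p \<pi> (Suc p) = \<pi> p" using \<open>\<pi> p < p\<close> unfolding ins_def sh_def by simp
      have e2: "ins p \<pi> p = p" unfolding ins_def by simp
      have "ins p \<pi> (p + 1) < ins p \<pi> p" using e1 e2 \<open>\<pi> p < p\<close> by (metis Suc_eq_plus1)
      then show ?thesis by (simp only: 3)
    next
      case 4
      define y where "y = i - 1"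
      have y: "i = Suc y" "p \<le> y" using 4 unfolding y_def by auto
      then have "same_block a y (Suc y)" using F2[of y] sb pa(1) by auto
      then have "\<pi> (Suc y) < \<pi> y" using Sa_dec[OF S] by blast
      then show ?thesis using y by (simp add: ins_def sh_less)
    qed
  qed
  have nofix: "ins p \<pi> i \<noteq> i" if "l \<in> {1..<j}" "i \<in> block a' l" for l i
  proof -
    have "i \<in> block a l" "l < j" using that block_lt by auto
    then have "i < p" "\<pi> i \<noteq> i" using block_lt_L pa(1) Dj_der[OF D, of l i] that by fastforce+
    then show ?thesis using ins_fix_lt by blast
  qed
  have fx: "p \<in> block a' j" "ins p \<pi> p = p" using blockj' pa(1,2) by (auto simp: ins_def)
  show "ins (P \<pi>) \<pi> \<in> Djstar j a'" unfolding p_def[symmetric] Djstar_def Sa_def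
    using perm decr nofix fx by blast
  then have "ins p \<pi> \<in> Sa a'" unfolding p_def Djstar_def by blast
  then show "Q (ins (P \<pi>) \<pi>) = P \<pi>" unfolding p_def[symmetric]
    using Quniq fx blockj' by blast
qed


lemma partB:
  assumes D: "\<pi> \<in> Djstar j a'"
  shows "del (Q \<pi>) \<pi> \<in> Dj j a" "P (del (Q \<pi>) \<pi>) = Q \<pi>" "\<pi> (Q \<pi>) = Q \<pi>"
proof -
  have S: "\<pi> \<in> Sa a'" using D by (simp add: Djstar_def)
  obtain i0 where i0: "i0 \<in> block a' j" "\<pi> i0 = i0" using D by (auto simp: Djstar_def)
  define q where "q = Q \<pi>"
  have qq: "q = i0" unfolding q_def using Quniq[OF S] i0 blockj' by auto
  have q1: "L \<le> q" "q \<le> R + 1" "\<pi> q = q" using qq i0 blockj' by auto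
  have q2: "q < \<pi> x" if "L \<le> x" "x < q" for x using decA'[OF S, of x q] that q1 by auto
  have q3: "\<pi> x < q" if "q < x" "x \<le> R + 1" for x using decA'[OF S, of q x] that q1 by auto
  have pp: "\<pi> permutes {1..n+1}" using Sa_perm[OF S] n' by simp
  have ip: "inj \<pi>" using pp by (rule permutes_inj)
  have ne: "y \<noteq> q \<Longrightarrow> \<pi> y \<noteq> q" for y using ip q1(3) by (metis injD)
  have perm: "del q \<pi> permutes {1..n}" using del_perm[OF pp] q1 LR by auto
  have decr: "del q \<pi> (i + 1) < del q \<pi> i" if sb: "same_block a i (i + 1)" for i
  proof -
    consider "Suc i < q" | "Suc i = q" | "q \<le> i" by linarith
    then show ?thesis
    proof cases
      case 1
      then have "same_block a' i (Suc i)" using F1[of i] sb q1 by auto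
      then have "\<pi> (Suc i) < \<pi> i" using Sa_dec[OF S] by blast
      moreover have "\<pi> (Suc i) \<noteq> q" "\<pi> i \<noteq> q" using ne 1 by auto
      ultimately have "ush q (\<pi> (Suc i)) < ush q (\<pi> i)" using ush_less by blast
      then show ?thesis using 1 by (simp add: del_def)
    next
      case 2
      have g: "partsum a (j - 1) < i \<and> Suc i \<le> partsum a j" using G[of a i j] sb q1 2 j1 by auto
      then have "q < \<pi> i" using q2[of i] 2 by auto
      moreover have "\<pi> (Suc (Suc i)) < q" using q3[of "Suc (Suc i)"] 2 g by auto
      ultimately show ?thesis using 2 by (simp add: del_def ush_def)
    next
      case 3
      then have "same_block a' (Suc i) (Suc (Suc i))" using F2[of i] sb q1 by auto
      then have "\<pi> (Suc (Suc i)) < \<pi> (Suc i)" using Sa_dec[OF S] by blast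
      moreover have "\<pi> (Suc (Suc i)) \<noteq> q" "\<pi> (Suc i) \<noteq> q" using ne 3 by auto
      ultimately have "ush q (\<pi> (Suc (Suc i))) < ush q (\<pi> (Suc i))" using ush_less by blast
      then show ?thesis using 3 by (simp add: del_def)
    qed
  qed
  have nofix: "del q \<pi> i \<noteq> i" if "l \<in> {1..j}" "i \<in> block a l" for l i
  proof (cases "l < j")
    case True
    then have "i \<in> block a' l" "i < L" using that block_lt block_lt_L by auto
    then have "\<pi> i \<noteq> i" "i < q" using D True that q1 by (auto simp: Djstar_def)
    then show ?thesis using del_fix_lt ne by metis
  next
    case False
    then have "l = j" using that by auto
    then have i: "L \<le> i" "i \<le> R" using that blockj by auto
    show ?thesis
    proof (cases "i < q")
      case True
      then have "\<pi> i \<noteq> i" using q2[of i] i by auto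
      then show ?thesis using del_fix_lt ne True by metis
    next
      case False
      then have "\<pi> (Suc i) < q" using q3[of "Suc i"] i by auto
      then have "\<pi> (Suc i) \<noteq> Suc i" "\<pi> (Suc i) \<noteq> q" using False by auto
      then show ?thesis using del_fix_ge False by (metis not_less)
    qed
  qed
  show "del (Q \<pi>) \<pi> \<in> Dj j a" unfolding q_def[symmetric] Dj_def Sa_def
    using perm decr nofix by blast
  show "P (del (Q \<pi>) \<pi>) = Q \<pi>" unfolding q_def[symmetric] P_def
  proof (rule Least_equality)
    show "L \<le> q \<and> (q = R + 1 \<or> del q \<pi> q < q)"
    proof (cases "q = R + 1")
      case False
      then have "\<pi> (Suc q) < q" using q3[of "Suc q"] q1 by auto
      then show ?thesis using q1 by (simp add: del_def ush_def)
    qed (use q1 in auto)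
    fix y assume y: "L \<le> y \<and> (y = R + 1 \<or> del q \<pi> y < y)"
    show "q \<le> y"
    proof (rule ccontr)
      assume "\<not> q \<le> y"
      then have "y < q" by simp
      then have "q < \<pi> y" "y \<noteq> R + 1" using q2[of y] y q1 by auto
      then have "del q \<pi> y = \<pi> y - 1" using \<open>y < q\<close> by (simp add: del_def ush_def)
      then show False using y \<open>q < \<pi> y\<close> \<open>y < q\<close> \<open>y \<noteq> R + 1\<close> by auto
    qed
  qed
  show "\<pi> (Q \<pi>) = Q \<pi>" using q1 q_def by simp
qed

lemma bij: "bij_betw (\<lambda>\<pi>. ins (P \<pi>) \<pi>) (Dj j a) (Djstar j a')"
proof (rule bij_betw_byWitness[where f' = "\<lambda>\<pi>. del (Q \<pi>) \<pi>"])
  show "\<forall>\<pi>\<in>Dj j a. del (Q (ins (P \<pi>) \<pi>)) (ins (P \<pi>) \<pi>) = \<pi>"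
    using partA(2) del_ins by simp
  show "\<forall>\<pi>\<in>Djstar j a'. ins (P (del (Q \<pi>) \<pi>)) (del (Q \<pi>) \<pi>) = \<pi>"
  proof
    fix \<pi> assume D: "\<pi> \<in> Djstar j a'"
    have "inj \<pi>" using D by (auto simp: Djstar_def Sa_def intro: permutes_inj)
    then show "ins (P (del (Q \<pi>) \<pi>)) (del (Q \<pi>) \<pi>) = \<pi>"
      using partB[OF D] ins_del by simp
  qed
  show "(\<lambda>\<pi>. ins (P \<pi>) \<pi>) ` Dj j a \<subseteq> Djstar j a'" using partA(1) by blast
  show "(\<lambda>\<pi>. del (Q \<pi>) \<pi>) ` Djstar j a' \<subseteq> Dj j a" using partB(1) by blast
qed

end

theorem mainTheorem8:
  fixes a :: "nat list" and j :: nat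
  assumes "1 \<le> j" and "j \<le> length a"
  shows "\<exists>f. bij_betw f (Dj j a) (Djstar j (a[j - 1 := a ! (j - 1) + 1]))"
proof -
  interpret S a j using assms by unfold_locales
  show ?thesis using bij by blast
qed

end
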